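(* Let $\{(\mu_t,\nu_t)\}_{t\ge0}$ be a weakly continuous $\rhd_c$-convolution semigroup with $(\mu_0,\nu_0)=(\delta_1,\delta_1)$. Let $B_1,B_2:\mathbb{D}\to\mathbb{C}$ be analytic with $\operatorname{Re}B_1,\operatorname{Re}B_2\le0$ such that, for all $t\ge0$ and $z\in\mathbb{D}$, $$\tfrac{d}{dt}\eta_{\mu_t}(z)=\eta_{\mu_t}(z)B_1(\eta_{\nu_t}(z)),\qquad \tfrac{d}{dt}\eta_{\nu_t}(z)=\eta_{\nu_t}(z)B_2(\eta_{\nu_t}(z)).$$ Write $B_1(z)=\sum_{n\ge1}r_nz^{n-1}$ and $\mathbb{N}=\{1,2,3,\dots\}$. (1) Suppose $B_2\equiv2\pi i\frac{p}{q}$, where $p\ne0$ and $q>0$ are integers with no common prime divisor. Then $$\eta_{\mu_1}(z)=z\exp\Big(r_1+\sum_{n\in\mathbb{N}\setminus q\mathbb{N}}r_{n+1}\frac{e^{2\pi inp/q}-1}{2\pi inp/q}z^n\Big).$$ In particular, if $B_2\equiv2\pi ik$ for a nonzero integer $k$, then $\eta_{\mu_1}(z)=e^{r_1}z$. (2) If $B_2\equiv0$, then $\eta_{\mu_1}(z)=ze^{B_1(z)}$.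
   Context: $\mathbb{T}$ is the unit circle, $\mathbb{D}$ the open unit disc, $\mathcal{P}(\mathbb{T})$ the Borel probability measures on $\mathbb{T}$, and $\delta_1$ the Dirac mass at $1$. For $\mu\in\mathcal{P}(\mathbb{T})$ let $\psi_\mu(z)=\int\frac{z\zeta}{1-z\zeta}d\mu(\zeta)$ and $\eta_\mu=\psi_\mu/(1+\psi_\mu)$ on $\mathbb{D}$; $\eta_\mu$ determines $\mu$. The multiplicative conditionally monotone convolution is $(\mu_1,\nu_1)\rhd_c(\mu_2,\nu_2)=(\mu,\nu)$ with $\eta_\nu=\eta_{\nu_1}\circ\eta_{\nu_2}$ and $\eta_\mu(z)=\eta_{\mu_2}(z)\,h_{\mu_1}(\eta_{\nu_2}(z))$, where $h_{\mu_1}(w)=\eta_{\mu_1}(w)/w$ and $h_{\mu_1}(0)=\eta_{\mu_1}'(0)$. A weakly continuous $\rhd_c$-convolution semigroup is a family $\{(\mu_t,\nu_t)\}_{t\ge0}$ in $\mathcal{P}(\mathbb{T})^2$ with $(\mu_{s+t},\nu_{s+t})=(\mu_s,\nu_s)\rhd_c(\mu_t,\nu_t)$ for all $s,t\ge0$ and $t\mapsto\mu_t,\nu_t$ weakly continuous. *)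

theory Defs
  imports "HOL-Probability.Probability"
begin

text \<open>Borel probability measures on the unit circle T, viewed as Borel
probability measures on the complex plane concentrated on sphere 0 1.\<close>
definition prob_T :: "complex measure \<Rightarrow> bool" where
  "prob_T M \<longleftrightarrow> prob_space M \<and> sets M = sets borel \<and> emeasure M (sphere 0 1) = 1"

definition psi :: "complex measure \<Rightarrow> complex \<Rightarrow> complex" where
  "psi M z = (\<integral>\<zeta>. z * \<zeta> / (1 - z * \<zeta>) \<partial>M)"

definition eta :: "complex measure \<Rightarrow> complex \<Rightarrow> complex" where
  "eta M z = psi M z / (1 + psi M z)"

definition h :: "complex measure \<Rightarrow> complex \<Rightarrow> complex" where
  "h M w = (if w = 0 then deriv (eta M) 0 else eta M w / w)"

definition delta1 :: "complex measure" where
  "delta1 = return borel 1"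

definition weakly_continuous :: "(real \<Rightarrow> complex measure) \<Rightarrow> bool" where
  "weakly_continuous \<mu> \<longleftrightarrow>
     (\<forall>f :: complex \<Rightarrow> real. continuous_on (sphere 0 1) f \<longrightarrow>
        continuous_on {0..} (\<lambda>t. \<integral>x. f x \<partial>(\<mu> t)))"

text \<open>Multiplicative conditionally monotone convolution semigroup:
  (mu_{s+t}, nu_{s+t}) = (mu_s, nu_s) \<rhd>_c (mu_t, nu_t), expressed through eta on D.\<close>
definition cm_semigroup :: "(real \<Rightarrow> complex measure) \<Rightarrow> (real \<Rightarrow> complex measure) \<Rightarrow> bool" where
  "cm_semigroup \<mu> \<nu> \<longleftrightarrow>
     (\<forall>t\<ge>0. prob_T (\<mu> t) \<and> prob_T (\<nu> t)) \<and>
     (\<forall>s\<ge>0. \<forall>t\<ge>0. \<forall>z\<in>ball 0 1.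
        eta (\<nu> (s + t)) z = eta (\<nu> s) (eta (\<nu> t) z) \<and>
        eta (\<mu> (s + t)) z = eta (\<mu> t) z * h (\<mu> s) (eta (\<nu> t) z)) \<and>
     weakly_continuous \<mu> \<and> weakly_continuous \<nu>"

end

theory Submission
  imports Defs
begin

lemma re_frac_bound:
  fixes w :: complex and \<rho> :: real
  assumes "norm w = \<rho>" "\<rho> < 1"
  shows "Re (w / (1 - w)) \<ge> - \<rho> / (1 + \<rho>)"
proof -
  obtain a b where w: "w = Complex a b" by (cases w)
  have ab: "a^2 + b^2 = \<rho>^2" using assms(1) w cmod_power2[of w] by simp
  have rho0: "\<rho> \<ge> 0" using assms(1) by auto
  have "a^2 \<le> \<rho>^2" using ab by (smt (verit) zero_le_power2)
  then have "\<bar>a\<bar> \<le> \<rho>" using rho0 by (metis abs_of_nonneg abs_le_square_iff)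
  then have ar: "a \<ge> -\<rho>" "a \<le> \<rho>" by auto
  have eq: "Re (w / (1 - w)) = (a - \<rho>^2) / (1 - 2*a + \<rho>^2)"
    using w ab by (simp add: Re_divide power2_eq_square algebra_simps)
  have d1: "1 - 2*a + \<rho>^2 \<ge> (1-\<rho>)^2" using ar by (simp add: power2_eq_square algebra_simps)
  have "(1-\<rho>)^2 > 0" using assms(2) by simp
  then have den2: "1 - 2*a + \<rho>^2 > 0" using d1 by linarith
  have "(a - \<rho>^2) * (1 + \<rho>) \<ge> - \<rho> * (1 - 2*a + \<rho>^2)"
  proof -
    have "(a + \<rho>) * (1 - \<rho>) \<ge> 0" using ar assms(2) by simp
    then show ?thesis by (simp add: power2_eq_square algebra_simps)
  qed
  then show ?thesis using den2 rho0 unfolding eq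
    by (simp add: divide_simps)
qed

lemma eta_ball:
  assumes M: "prob_T M" and z: "z \<in> ball 0 1"
  shows "eta M z \<in> ball 0 1"
proof -
  define \<rho> where "\<rho> = norm z"
  have r1: "\<rho> < 1" "\<rho> \<ge> 0" using z by (auto simp: \<rho>_def)
  interpret prob_space M using M by (simp add: prob_T_def)
  have "prob (sphere 0 1) = 1" using M by (simp add: prob_T_def measure_def)
  then have ae: "AE x in M. x \<in> sphere 0 1" by (rule AE_prob_1)
  define m where "m = - \<rho> / (1 + \<rho>)"
  have aeb: "AE x in M. m \<le> Re (z * x / (1 - z * x))"
    using ae
  proof (rule AE_mp, intro AE_I2 impI)
    fix x :: complex assume "x \<in> sphere 0 1"
    then have "norm (z * x) = \<rho>" by (simp add: norm_mult \<rho>_def)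
    then show "m \<le> Re (z * x / (1 - z * x))" unfolding m_def using re_frac_bound r1 by blast
  qed
  have m0: "m \<le> 0" using r1 by (simp add: m_def)
  have rp: "Re (psi M z) \<ge> m"
  proof (cases "integrable M (\<lambda>x. z * x / (1 - z * x))")
    case True
    have "(\<integral>x. m \<partial>M) \<le> (\<integral>x. Re (z * x / (1 - z * x)) \<partial>M)"
      using True aeb by (intro integral_mono_AE) auto
    then show ?thesis unfolding psi_def using integral_Re[OF True] by (simp add: prob_space)
  next
    case False
    then show ?thesis using m0 by (simp add: not_integrable_integral_eq psi_def)
  qed
  have "m > -1/2" using r1 by (simp add: m_def field_simps)
  with rp have rp2: "1 + 2 * Re (psi M z) > 0" by linarith
  define P where "P = psi M z"
  have "(norm P)^2 < (norm (1 + P))^2"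
    using rp2 unfolding P_def[symmetric] cmod_power2 by (simp add: power2_eq_square algebra_simps)
  then have "norm P < norm (1 + P)" by (simp add: power_less_imp_less_base)
  then have "norm (P / (1 + P)) < 1"
    by (simp add: norm_divide divide_less_eq)
  then show ?thesis by (simp add: eta_def P_def)
qed

lemma eta_delta1:
  assumes "z \<in> ball (0::complex) 1"
  shows "eta delta1 z = z"
proof -
  have m: "(\<lambda>\<zeta>. z * \<zeta> / (1 - z * \<zeta>)) \<in> borel_measurable borel" by measurable
  have "psi delta1 z = z / (1 - z)"
    unfolding psi_def delta1_def using m by (simp add: integral_return)
  moreover have "z \<noteq> 1" using assms by auto
  moreover have "z / (1 - z) / (1 + z / (1 - z)) = z" using \<open>z \<noteq> 1\<close>
    by (simp add: field_simps)
  ultimately show ?thesis unfolding eta_def by simp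
qed

lemma zero_deriv_const:
  fixes F :: "real \<Rightarrow> complex"
  assumes "\<And>s. s \<in> {0..1} \<Longrightarrow> (F has_vector_derivative 0) (at s within {0..1})"
    and "t \<in> {0..1}"
  shows "F t = F 0"
proof -
  have "\<exists>c. \<forall>x\<in>{0..1::real}. F x = c"
    by (rule has_derivative_zero_constant) (use assms(1) in \<open>auto simp: has_vector_derivative_def\<close>)
  then show ?thesis using assms(2) by force
qed

lemma exp_vd:
  fixes c :: complex
  shows "((\<lambda>s::real. exp (c * of_real s)) has_vector_derivative c * exp (c * of_real s)) (at s within S)"
proof -
  have "((\<lambda>w. exp (c * w)) has_field_derivative c * exp (c * of_real s)) (at (of_real s))"
    by (auto intro!: derivative_eq_intros)
  then show ?thesis by (rule has_vector_derivative_real_field)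
qed


lemma nu_explicit:
  assumes sg: "cm_semigroup \<mu> \<nu>" and init: "\<nu> 0 = delta1"
    and ode2: "\<forall>t\<ge>0. \<forall>z\<in>ball 0 1.
       ((\<lambda>s. eta (\<nu> s) z) has_vector_derivative (eta (\<nu> t) z * B2 (eta (\<nu> t) z))) (at t within {0..})"
    and Bc: "\<forall>w\<in>ball 0 1. B2 w = c"
    and z: "z \<in> ball 0 1" and t: "t \<in> {0..1}"
  shows "eta (\<nu> t) z = z * exp (c * of_real t)"
proof -
  define F where "F s = eta (\<nu> s) z * exp (- c * of_real s)" for s
  have D: "(F has_vector_derivative 0) (at s within {0..1})" if s: "s \<in> {0..1}" for s
  proof -
    have pt: "prob_T (\<nu> s)" using sg s unfolding cm_semigroup_def by auto
    have b: "B2 (eta (\<nu> s) z) = c" using Bc eta_ball[OF pt z] by blast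
    have d1: "((\<lambda>s. eta (\<nu> s) z) has_vector_derivative (eta (\<nu> s) z * c)) (at s within {0..1})"
    proof -
      have "((\<lambda>s. eta (\<nu> s) z) has_vector_derivative (eta (\<nu> s) z * B2 (eta (\<nu> s) z))) (at s within {0..})"
        using ode2 s z by auto
      then show ?thesis using b by (auto intro: has_vector_derivative_within_subset)
    qed
    note d2 = exp_vd[of "-c" s "{0..1}"]
    show ?thesis unfolding F_def
      using has_vector_derivative_mult[OF d1 d2] by (simp add: algebra_simps)
  qed
  have "F t = F 0" by (rule zero_deriv_const[OF D t])
  then have "eta (\<nu> t) z * exp (- c * of_real t) = z" using eta_delta1[OF z] init by (simp add: F_def)
  then show ?thesis by (simp add: exp_minus field_simps)
qed


lemma mu_explicit:
  assumes sg: "cm_semigroup \<mu> \<nu>" and init: "\<mu> 0 = delta1" "\<nu> 0 = delta1"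
    and hol: "B1 holomorphic_on ball 0 1"
    and ode1: "\<forall>t\<ge>0. \<forall>z\<in>ball 0 1.
       ((\<lambda>s. eta (\<mu> s) z) has_vector_derivative (eta (\<mu> t) z * B1 (eta (\<nu> t) z))) (at t within {0..})"
    and ode2: "\<forall>t\<ge>0. \<forall>z\<in>ball 0 1.
       ((\<lambda>s. eta (\<nu> s) z) has_vector_derivative (eta (\<nu> t) z * B2 (eta (\<nu> t) z))) (at t within {0..})"
    and Bc: "\<forall>w\<in>ball 0 1. B2 w = c"
    and z: "z \<in> ball 0 1"
  shows "eta (\<mu> 1) z = z * exp (integral {0..1} (\<lambda>s. B1 (z * exp (c * of_real s))))"
proof -
  define g where "g s = B1 (z * exp (c * of_real s))" for s
  define G where "G u = integral {0..u} g" for u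
  have inb: "z * exp (c * of_real s) \<in> ball 0 1" if "s \<in> {0..1}" for s
  proof -
    have "prob_T (\<nu> s)" using sg that unfolding cm_semigroup_def by auto
    then show ?thesis using eta_ball z nu_explicit[OF sg init(2) ode2 Bc z that] by metis
  qed
  have cg: "continuous_on {0..1} g" unfolding g_def
    by (rule continuous_on_compose2[OF holomorphic_on_imp_continuous_on[OF hol]])
       (auto intro!: continuous_intros inb)
  have D: "(F has_vector_derivative 0) (at s within {0..1})" if s: "s \<in> {0..1}"
    and F: "F = (\<lambda>s. eta (\<mu> s) z * exp (- G s))" for s F
  proof -
    have e: "eta (\<nu> s) z = z * exp (c * of_real s)" by (rule nu_explicit[OF sg init(2) ode2 Bc z s])
    have d1: "((\<lambda>s. eta (\<mu> s) z) has_vector_derivative (eta (\<mu> s) z * g s)) (at s within {0..1})"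
    proof -
      have "((\<lambda>s. eta (\<mu> s) z) has_vector_derivative (eta (\<mu> s) z * B1 (eta (\<nu> s) z))) (at s within {0..})"
        using ode1 s z by auto
      then show ?thesis using e by (auto simp: g_def intro: has_vector_derivative_within_subset)
    qed
    have dG: "(G has_vector_derivative g s) (at s within {0..1})"
      unfolding G_def by (rule integral_has_vector_derivative[OF cg s])
    have dG': "((\<lambda>u. - G u) has_vector_derivative - g s) (at s within {0..1})"
      using dG by (auto intro!: derivative_eq_intros)
    have d2: "((exp \<circ> (\<lambda>u. - G u)) has_vector_derivative (- g s) * exp (- G s)) (at s within {0..1})"
      by (rule field_vector_diff_chain_within[OF dG']) (auto intro!: derivative_eq_intros)
    show ?thesis unfolding F
      using has_vector_derivative_mult[OF d1 d2] by (simp add: o_def algebra_simps)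
  qed
  define F where "F = (\<lambda>s. eta (\<mu> s) z * exp (- G s))"
  have "F 1 = F 0" by (rule zero_deriv_const[OF D]) (auto simp: F_def)
  moreover have "G 0 = 0" by (simp add: G_def)
  ultimately have "eta (\<mu> 1) z * exp (- G 1) = z" using eta_delta1[OF z] init by (simp add: F_def)
  then have "eta (\<mu> 1) z = z * exp (G 1)" by (simp add: exp_minus field_simps)
  moreover have "g = (\<lambda>s. B1 (z * exp (c * of_real s)))" by (simp add: g_def fun_eq_iff)
  ultimately show ?thesis by (simp add: G_def)
qed

lemma term_integral:
  fixes c z a :: complex and i :: nat
  assumes "c \<noteq> 0"
  shows "((\<lambda>s::real. a * (z * exp (c * of_real s)) ^ i) has_integral
          (if i = 0 then a else a * z ^ i * (exp (c * of_nat i) - 1) / (c * of_nat i))) {0..1}"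
proof (cases "i = 0")
  case True
  then show ?thesis using has_integral_const_real[of a 0 1] by simp
next
  case False
  define k where "k = c * of_nat i"
  have k0: "k \<noteq> 0" using False assms by (simp add: k_def)
  have eq: "a * (z * exp (c * of_real s)) ^ i = a * z ^ i * exp (k * of_real s)" for s :: real
    by (simp add: k_def power_mult_distrib exp_of_nat_mult[symmetric] algebra_simps)
  define \<Phi> where "\<Phi> s = a * z ^ i * exp (k * of_real s) / k" for s :: real
  have "((\<lambda>s. a * z ^ i * exp (k * of_real s)) has_integral (\<Phi> 1 - \<Phi> 0)) {0..1}"
  proof (rule fundamental_theorem_of_calculus)
    fix x :: real assume "x \<in> {0..1}"
    have "((\<lambda>s. a * z ^ i / k * exp (k * of_real s)) has_vector_derivative
           a * z ^ i / k * (k * exp (k * of_real x))) (at x within {0..1})"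
    proof -
      have "((\<lambda>w. a * z ^ i / k * exp (k * w)) has_field_derivative a * z ^ i / k * (k * exp (k * of_real x))) (at (of_real x))"
        by (auto intro!: derivative_eq_intros)
      then show ?thesis by (rule has_vector_derivative_real_field)
    qed
    then show "(\<Phi> has_vector_derivative a * z ^ i * exp (k * of_real x)) (at x within {0..1})"
      using k0 unfolding \<Phi>_def by (simp add: field_simps)
  qed simp
  moreover have "\<Phi> 1 - \<Phi> 0 = a * z ^ i * (exp k - 1) / k"
    by (simp add: \<Phi>_def diff_divide_distrib right_diff_distrib)
  then have "\<Phi> 1 - \<Phi> 0 = a * z ^ i * (exp (c * of_nat i) - 1) / (c * of_nat i)"
    by (simp add: k_def)
  ultimately show ?thesis using False by (simp add: eq)
qed

lemma integral_series:
  fixes B1 :: "complex \<Rightarrow> complex" and r :: "nat \<Rightarrow> complex"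
  assumes coeffs: "\<forall>z\<in>ball 0 1. (\<lambda>n. r (n + 1) * z ^ n) sums B1 z"
    and z: "z \<in> ball 0 1" and c: "Re c = 0" "c \<noteq> 0"
  shows "(\<lambda>i. if i = 0 then r 1 else r (i+1) * z ^ i * (exp (c * of_nat i) - 1) / (c * of_nat i))
           sums integral {0..1} (\<lambda>s. B1 (z * exp (c * of_real s)))"
proof -
  define a where "a i = r (i + 1)" for i
  define \<rho> where "\<rho> = norm z"
  have \<rho>1: "\<rho> < 1" using z by (simp add: \<rho>_def)
  have cr: "conv_radius a \<ge> 1"
  proof (rule conv_radius_geI_ex')
    fix r' :: real assume "0 < r'" "ereal r' < 1"
    then have "(of_real r' :: complex) \<in> ball 0 1" by simp
    then show "summable (\<lambda>n. a n * of_real r' ^ n)"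
      using coeffs sums_summable unfolding a_def by blast
  qed
  then have "ereal \<rho> < conv_radius a" using \<rho>1 by (meson ereal_less(3) less_le_trans less_ereal.simps(1))
  from powser_uniform_limit[OF this, of 0]
  have U: "uniform_limit (cball 0 \<rho>) (\<lambda>n x. \<Sum>i<n. a i * x ^ i) (\<lambda>x. suminf (\<lambda>i. a i * x ^ i)) sequentially"
    by simp
  define f where "f n s = (\<Sum>i<n. a i * (z * exp (c * of_real s)) ^ i)" for n s
  define h where "h s = B1 (z * exp (c * of_real s))" for s
  have inc: "z * exp (c * of_real s) \<in> cball 0 \<rho>" for s :: real
    using c by (simp add: \<rho>_def norm_mult)
  have suml: "suminf (\<lambda>i. a i * x ^ i) = B1 x" if "x \<in> cball 0 \<rho>" for x
  proof -
    have "x \<in> ball 0 1" using that \<rho>1 by simp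
    then show ?thesis using coeffs sums_unique unfolding a_def by metis
  qed
  have UL: "uniform_limit {0..1} f h sequentially"
  proof (rule uniform_limitI)
    fix e :: real assume "e > 0"
    then have "\<forall>\<^sub>F n in sequentially. \<forall>x\<in>cball 0 \<rho>. dist (\<Sum>i<n. a i * x ^ i) (suminf (\<lambda>i. a i * x ^ i)) < e"
      using U unfolding uniform_limit_iff by blast
    then show "\<forall>\<^sub>F n in sequentially. \<forall>x\<in>{0..1}. dist (f n x) (h x) < e"
    proof (rule eventually_mono)
      fix n assume H: "\<forall>x\<in>cball 0 \<rho>. dist (\<Sum>i<n. a i * x ^ i) (suminf (\<lambda>i. a i * x ^ i)) < e"
      show "\<forall>x\<in>{0..1}. dist (f n x) (h x) < e"
      proof
        fix s :: real assume "s \<in> {0..1}"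
        show "dist (f n s) (h s) < e"
          using H[rule_format, OF inc[of s]] suml[OF inc[of s]] unfolding f_def h_def by simp
      qed
    qed
  qed
  have cf: "continuous_on {0..1} (f n)" for n unfolding f_def
    by (auto intro!: continuous_intros)
  obtain I J where IJ: "\<And>n. (f n has_integral I n) {0..1}" "(h has_integral J) {0..1}" "I \<longlonglongrightarrow> J"
    by (rule uniform_limit_integral[OF UL cf]) auto
  define b where "b i = (if i = 0 then r 1 else r (i+1) * z ^ i * (exp (c * of_nat i) - 1) / (c * of_nat i))" for i
  have In: "I n = (\<Sum>i<n. b i)" for n
  proof -
    have "(f n has_integral (\<Sum>i<n. b i)) {0..1}"
      unfolding f_def
    proof (rule has_integral_sum)
      fix i assume "i \<in> {..<n}"
      show "((\<lambda>s. a i * (z * exp (c * of_real s)) ^ i) has_integral b i) {0..1}"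
        using term_integral[OF c(2), of "a i" z i] unfolding b_def a_def by (simp split: if_splits)
    qed simp
    then show ?thesis using IJ(1) has_integral_unique by blast
  qed
  have "J = integral {0..1} h" using IJ(2) by (simp add: integral_unique)
  then have "b sums integral {0..1} h" unfolding sums_def using IJ(3) In[symmetric] by simp
  then show ?thesis unfolding b_def h_def by simp
qed

theorem proposition5p7:
  fixes \<mu> \<nu> :: "real \<Rightarrow> complex measure"
    and B1 B2 :: "complex \<Rightarrow> complex"
    and r :: "nat \<Rightarrow> complex"
  assumes sg: "cm_semigroup \<mu> \<nu>"
    and init: "\<mu> 0 = delta1" "\<nu> 0 = delta1"
    and hol: "B1 holomorphic_on ball 0 1" "B2 holomorphic_on ball 0 1"
    and re: "\<forall>z\<in>ball 0 1. Re (B1 z) \<le> 0" "\<forall>z\<in>ball 0 1. Re (B2 z) \<le> 0"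
    and ode1: "\<forall>t\<ge>0. \<forall>z\<in>ball 0 1.
       ((\<lambda>s. eta (\<mu> s) z) has_vector_derivative (eta (\<mu> t) z * B1 (eta (\<nu> t) z))) (at t within {0..})"
    and ode2: "\<forall>t\<ge>0. \<forall>z\<in>ball 0 1.
       ((\<lambda>s. eta (\<nu> s) z) has_vector_derivative (eta (\<nu> t) z * B2 (eta (\<nu> t) z))) (at t within {0..})"
    and coeffs: "\<forall>z\<in>ball 0 1. (\<lambda>n. r (n + 1) * z ^ n) sums B1 z"
  shows
    "(\<forall>p q :: int. p \<noteq> 0 \<longrightarrow> q > 0 \<longrightarrow> coprime p q \<longrightarrow>
        (\<forall>z\<in>ball 0 1. B2 z = 2 * pi * \<i> * of_int p / of_int q) \<longrightarrow>
        (\<forall>z\<in>ball 0 1.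
           let a = (\<lambda>n::nat. if n = 0 \<or> q dvd int n then 0
                     else r (n + 1) * (exp (2 * pi * \<i> * of_nat n * of_int p / of_int q) - 1)
                          / (2 * pi * \<i> * of_nat n * of_int p / of_int q) * z ^ n)
           in summable a \<and> eta (\<mu> 1) z = z * exp (r 1 + suminf a)))
     \<and> (\<forall>k :: int. k \<noteq> 0 \<longrightarrow> (\<forall>z\<in>ball 0 1. B2 z = 2 * pi * \<i> * of_int k) \<longrightarrow>
        (\<forall>z\<in>ball 0 1. eta (\<mu> 1) z = exp (r 1) * z))
     \<and> ((\<forall>z\<in>ball 0 1. B2 z = 0) \<longrightarrow>
        (\<forall>z\<in>ball 0 1. eta (\<mu> 1) z = z * exp (B1 z)))"
  (is "?A \<and> ?B \<and> ?C")
proof -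
  have A: ?A
  proof (intro allI impI ballI)
    fix p q :: int and z :: complex
    assume p: "p \<noteq> 0" and q: "q > 0" and cop: "coprime p q"
      and B2c: "\<forall>z\<in>ball 0 1. B2 z = 2 * pi * \<i> * of_int p / of_int q"
      and z: "z \<in> ball 0 1"
    define c where "c = 2 * pi * \<i> * of_int p / of_int q"
    have Rc: "Re c = 0" by (simp add: c_def)
    have c0: "c \<noteq> 0" using p q by (simp add: c_def)
    define S where "S = integral {0..1} (\<lambda>s. B1 (z * exp (c * of_real s)))"
    define b where "b i = (if i = 0 then r 1 else r (i+1) * z ^ i * (exp (c * of_nat i) - 1) / (c * of_nat i))" for i
    have bS: "b sums S" unfolding b_def S_def by (rule integral_series[OF coeffs z Rc c0])
    have eta1: "eta (\<mu> 1) z = z * exp S"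
      unfolding S_def by (rule mu_explicit[OF sg init hol(1) ode1 ode2 _ z]) (use B2c c_def in auto)
    define a where "a = (\<lambda>n::nat. if n = 0 \<or> q dvd int n then 0
                     else r (n + 1) * (exp (2 * pi * \<i> * of_nat n * of_int p / of_int q) - 1)
                          / (2 * pi * \<i> * of_nat n * of_int p / of_int q) * z ^ n)"
    have ab: "a (Suc n) = b (Suc n)" for n
    proof -
      have ce: "2 * pi * \<i> * of_nat (Suc n) * of_int p / of_int q = c * of_nat (Suc n)"
        by (simp add: c_def)
      show ?thesis
      proof (cases "q dvd int (Suc n)")
        case True
        then obtain m where m: "int (Suc n) = q * m" by (auto simp: dvd_def)
        have "of_nat (Suc n) = (of_int (q * m) :: complex)" using m by (metis of_int_of_nat_eq)
        then have "c * of_nat (Suc n) = 2 * of_int (p * m) * pi * \<i>"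
          using q by (simp add: c_def field_simps)
        then have "exp (c * of_nat (Suc n)) = 1"
          using exp_integer_2pi[of "of_int (p * m)"] by simp
        then show ?thesis using True by (simp add: a_def b_def)
      next
        case False
        then show ?thesis unfolding a_def b_def ce by (simp add: field_simps)
      qed
    qed
    have "(\<lambda>n. b (Suc n)) sums (S - b 0)" using bS sums_Suc_iff[of b "S - b 0"] by simp
    then have "(\<lambda>n. a (Suc n)) sums (S - r 1)" using ab by (simp add: b_def)
    then have aS: "a sums (S - r 1)" using sums_Suc_iff[of a "S - r 1"] by (simp add: a_def)
    show "let a = (\<lambda>n::nat. if n = 0 \<or> q dvd int n then 0
                     else r (n + 1) * (exp (2 * pi * \<i> * of_nat n * of_int p / of_int q) - 1)
                          / (2 * pi * \<i> * of_nat n * of_int p / of_int q) * z ^ n)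
           in summable a \<and> eta (\<mu> 1) z = z * exp (r 1 + suminf a)"
      unfolding Let_def a_def[symmetric] using aS eta1 sums_summable sums_unique by fastforce
  qed
  have B: ?B
  proof (intro allI impI ballI)
    fix k :: int and z :: complex
    assume k: "k \<noteq> 0" and Bk: "\<forall>z\<in>ball 0 1. B2 z = 2 * pi * \<i> * of_int k" and z: "z \<in> ball 0 1"
    have "\<forall>z\<in>ball 0 1. B2 z = 2 * pi * \<i> * of_int k / of_int (1::int)" using Bk by simp
    then have "let a = (\<lambda>n::nat. if n = 0 \<or> (1::int) dvd int n then 0
                     else r (n + 1) * (exp (2 * pi * \<i> * of_nat n * of_int k / of_int (1::int)) - 1)
                          / (2 * pi * \<i> * of_nat n * of_int k / of_int (1::int)) * z ^ n)
           in summable a \<and> eta (\<mu> 1) z = z * exp (r 1 + suminf a)"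
      using A k z by (meson coprime_1_right zero_less_one)
    then show "eta (\<mu> 1) z = exp (r 1) * z" by (simp add: Let_def)
  qed
  have C: ?C
  proof (intro impI ballI)
    fix z :: complex assume B0: "\<forall>z\<in>ball 0 1. B2 z = 0" and z: "z \<in> ball 0 1"
    have "eta (\<mu> 1) z = z * exp (integral {0..1} (\<lambda>s. B1 (z * exp (0 * of_real s))))"
      by (rule mu_explicit[OF sg init hol(1) ode1 ode2 B0 z])
    then show "eta (\<mu> 1) z = z * exp (B1 z)" by simp
  qed
  show ?thesis using A B C by blast
qed

end
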